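(* Let $N, K, k, M$ be positive integers, let $B$ and $\Theta$ be finite nonempty sets, and let $\mathbf f_1,\dots,\mathbf f_K \in \mathbb C^N$ be steering vectors (beams). Let $\{R(\cdot,\boldsymbol\theta,\boldsymbol\beta) : (\boldsymbol\theta,\boldsymbol\beta)\in B^k\times\Theta^k\}$ be a family of real-valued functions on $\mathbb C^N$, and fix a true parameter $(\boldsymbol\theta^*,\boldsymbol\beta^* )\in B^k\times\Theta^k$. Let $a_1,\dots,a_M\in\{1,\dots,K\}$ be actions, and suppose the observed rewards are $r_t = R(\mathbf f_{a_t},\boldsymbol\theta^*,\boldsymbol\beta^* )+\eta_t$ for $t=1,\dots,M$, where $\eta_1,\dots,\eta_M$ are independent $\mathcal N(0,\sigma^2)$ random variables, independent of the actions, with $\sigma>0$ a known constant. For $(\boldsymbol\theta,\boldsymbol\beta)\in B^k\times\Theta^k$ define $$\mathrm{SSE}_M(\boldsymbol\theta,\boldsymbol\beta)=\sum_{t=1}^M\big(R(\mathbf f_{a_t},\boldsymbol\theta,\boldsymbol\beta)-r_t\big)^2,$$ and for a function $g:\mathbb C^N\to\mathbb R$ define the data norm $\|g\|_{S_M}=\sqrt{\sum_{t=1}^M g(\mathbf f_{a_t})^2}$. Then for every $\delta\in(0,1)$ there exists an event $E$ with $\mathbb P(E)\ge 1-\delta$ on which, simultaneously for all $(\boldsymbol\theta,\boldsymbol\beta)\in B^k\times\Theta^k$, $$\mathrm{SSE}_M(\boldsymbol\theta,\boldsymbol\beta)-\mathrm{SSE}_M(\boldsymbol\theta^*,\boldsymbol\beta^*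 )\ \ge\ \tfrac12\big\|R(\cdot,\boldsymbol\theta,\boldsymbol\beta)-R(\cdot,\boldsymbol\theta^*,\boldsymbol\beta^* )\big\|_{S_M}^2-4k\sigma^2\log\Big(\frac{|B|\,|\Theta|}{\delta}\Big)$$ and $$\mathrm{SSE}_M(\boldsymbol\theta,\boldsymbol\beta)-\mathrm{SSE}_M(\boldsymbol\theta^*,\boldsymbol\beta^* )\ \le\ \tfrac32\big\|R(\cdot,\boldsymbol\theta,\boldsymbol\beta)-R(\cdot,\boldsymbol\theta^*,\boldsymbol\beta^* )\big\|_{S_M}^2+4k\sigma^2\log\Big(\frac{|B|\,|\Theta|}{\delta}\Big).$$
   Context: This is the setting of a bandit-style beam selection problem: at each time step $t$ a beam index $a_t\in\{1,\dots,K\}$ is played and a noisy reward $r_t$ is observed. The reward model $R(\mathbf f,\boldsymbol\theta,\boldsymbol\beta)$ is a parametric function of a steering vector $\mathbf f\in\mathbb C^N$ with parameters $\boldsymbol\theta\in B^k$ and $\boldsymbol\beta\in\Theta^k$ ranging over finite grids; $(\boldsymbol\theta^*,\boldsymbol\beta^* )$ denotes the true parameter. The dataset $S_M=\{(a_t,r_t)\}_{t=1}^M$ consists of the first $M$ action–reward pairs. The probability is over the noise $\eta_1,\dots,\eta_M$ (conditionally on the actions). *)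

theory Defs
  imports "HOL-Analysis.Analysis" "HOL-Probability.Probability"
begin

definition SSE :: "nat \<Rightarrow> (nat \<Rightarrow> 'x) \<Rightarrow> (nat \<Rightarrow> nat) \<Rightarrow> ('x \<Rightarrow> real) \<Rightarrow> (nat \<Rightarrow> real) \<Rightarrow> real" where
  "SSE M f a g r = (\<Sum>t=1..M. (g (f (a t)) - r t)\<^sup>2)"

definition data_norm :: "nat \<Rightarrow> (nat \<Rightarrow> 'x) \<Rightarrow> (nat \<Rightarrow> nat) \<Rightarrow> ('x \<Rightarrow> real) \<Rightarrow> real" where
  "data_norm M f a g = sqrt (\<Sum>t=1..M. (g (f (a t)))\<^sup>2)"

end

theory Submission
  imports Defs
begin

lemma std_sym: "std_normal_density (-x) = std_normal_density x"
  by (simp add: normal_density_def)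

lemma std_shift_le:
  assumes "t \<ge> 0" "x \<ge> 0"
  shows "std_normal_density (t + x) \<le> exp (- t\<^sup>2 / 2) * std_normal_density x"
proof -
  have "exp (- (t + x)\<^sup>2 / 2) \<le> exp (- t\<^sup>2 / 2) * exp (- x\<^sup>2 / 2)"
  proof -
    have "(t+x)\<^sup>2 = t\<^sup>2 + x\<^sup>2 + 2*(t*x)" by (simp add: power2_eq_square algebra_simps)
    then have "- (t + x)\<^sup>2 / 2 \<le> - t\<^sup>2 / 2 + - x\<^sup>2 / 2" using mult_nonneg_nonneg[OF assms] by linarith
    then show ?thesis unfolding mult_exp_exp by simp
  qed
  then show ?thesis unfolding std_normal_density_def
    by (simp add: mult.left_commute divide_right_mono)
qed

definition Atail :: "real \<Rightarrow> ennreal" where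
  "Atail t = (\<integral>\<^sup>+x. ennreal (std_normal_density x) * indicator {t<..} x \<partial>lborel)"

lemma Atail_refl: "(\<integral>\<^sup>+x. ennreal (std_normal_density x) * indicator {..<-t} x \<partial>lborel) = Atail t"
proof -
  have "(\<integral>\<^sup>+x. ennreal (std_normal_density x) * indicator {..<-t} x \<partial>lborel)
     = ennreal \<bar>-1\<bar> * (\<integral>\<^sup>+x. ennreal (std_normal_density (0 + -1 * x)) * indicator {..<-t} (0 + -1 * x) \<partial>lborel)"
    by (rule nn_integral_real_affine[where f="\<lambda>x. ennreal (std_normal_density x) * indicator {..<-t} x" and c="-1" and t=0]) auto
  also have "\<dots> = Atail t" unfolding Atail_def
    by (auto intro!: nn_integral_cong simp: std_sym indicator_def)
  finally show ?thesis .
qed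

lemma Atail_shift:
  assumes "t \<ge> 0" shows "Atail t \<le> ennreal (exp (- t\<^sup>2 / 2)) * Atail 0"
proof -
  have "Atail t = ennreal \<bar>1\<bar> * (\<integral>\<^sup>+x. ennreal (std_normal_density (t + 1 * x)) * indicator {t<..} (t + 1 * x) \<partial>lborel)"
    unfolding Atail_def by (rule nn_integral_real_affine[where f="\<lambda>x. ennreal (std_normal_density x) * indicator {t<..} x" and c=1 and t=t]) auto
  also have "\<dots> = (\<integral>\<^sup>+x. ennreal (std_normal_density (t + x)) * indicator {0<..} x \<partial>lborel)"
    by (auto intro!: nn_integral_cong simp: indicator_def)
  also have "\<dots> \<le> (\<integral>\<^sup>+x. ennreal (exp (- t\<^sup>2 / 2)) * (ennreal (std_normal_density x) * indicator {0<..} x) \<partial>lborel)"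
  proof (intro nn_integral_mono)
    fix x :: real
    show "ennreal (std_normal_density (t + x)) * indicator {0<..} x \<le> ennreal (exp (- t\<^sup>2 / 2)) * (ennreal (std_normal_density x) * indicator {0<..} x)"
    proof (cases "x > 0")
      case True
      then show ?thesis using std_shift_le[OF assms, of x]
        by (simp add: ennreal_mult'[symmetric] ennreal_leI)
    qed simp
  qed
  also have "\<dots> = ennreal (exp (- t\<^sup>2 / 2)) * Atail 0"
    unfolding Atail_def by (rule nn_integral_cmult) auto
  finally show ?thesis .
qed

lemma Atail_split:
  assumes "t \<ge> 0"
  shows "(\<integral>\<^sup>+x. ennreal (std_normal_density x) * indicator {x. t < \<bar>x\<bar>} x \<partial>lborel) = 2 * Atail t"
proof -
  have "(\<integral>\<^sup>+x. ennreal (std_normal_density x) * indicator {x. t < \<bar>x\<bar>} x \<partial>lborel)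
    = (\<integral>\<^sup>+x. ennreal (std_normal_density x) * indicator {t<..} x + ennreal (std_normal_density x) * indicator {..<-t} x \<partial>lborel)"
    using assms by (intro nn_integral_cong) (auto simp: indicator_def)
  also have "\<dots> = Atail t + Atail t"
    by (subst nn_integral_add) (auto simp: Atail_def Atail_refl)
  finally show ?thesis by (simp add: mult_2)
qed

lemma Atail0: "2 * Atail 0 \<le> 1"
proof -
  have "2 * Atail 0 = (\<integral>\<^sup>+x. ennreal (std_normal_density x) * indicator {x. 0 < \<bar>x\<bar>} x \<partial>lborel)"
    using Atail_split[of 0] by simp
  also have "\<dots> \<le> (\<integral>\<^sup>+x. ennreal (std_normal_density x) \<partial>lborel)"
    by (intro nn_integral_mono) (auto simp: indicator_def)
  also have "\<dots> = 1"
    by (subst nn_integral_eq_integral) auto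
  finally show ?thesis .
qed

lemma std_tail:
  assumes "t \<ge> 0"
  shows "(\<integral>\<^sup>+x. ennreal (std_normal_density x) * indicator {x. t < \<bar>x\<bar>} x \<partial>lborel) \<le> ennreal (exp (- t\<^sup>2 / 2))"
proof -
  have "(\<integral>\<^sup>+x. ennreal (std_normal_density x) * indicator {x. t < \<bar>x\<bar>} x \<partial>lborel) = 2 * Atail t"
    using Atail_split[OF assms] .
  also have "\<dots> \<le> 2 * (ennreal (exp (- t\<^sup>2 / 2)) * Atail 0)"
    using Atail_shift[OF assms] by (intro mult_left_mono) auto
  also have "\<dots> = ennreal (exp (- t\<^sup>2 / 2)) * (2 * Atail 0)"
    by (simp add: ac_simps)
  also have "\<dots> \<le> ennreal (exp (- t\<^sup>2 / 2)) * 1"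
    using Atail0 by (intro mult_left_mono) auto
  finally show ?thesis by simp
qed

lemma (in prob_space) normal_tail:
  assumes D: "distributed M lborel Y (normal_density 0 s)" and s: "s > 0" and x: "x \<ge> 0"
  shows "prob {\<omega>\<in>space M. x < \<bar>Y \<omega>\<bar>} \<le> exp (- x\<^sup>2 / (2 * s\<^sup>2))"
proof -
  have Z: "distributed M lborel (\<lambda>\<omega>. (Y \<omega> - 0) / s) std_normal_density"
    using D normal_standard_normal_convert[OF s] by simp
  have eq: "{\<omega>\<in>space M. x < \<bar>Y \<omega>\<bar>} = (\<lambda>\<omega>. (Y \<omega> - 0) / s) -` {z. x / s < \<bar>z\<bar>} \<inter> space M"
    using s by (auto simp: field_simps abs_divide)
  have "emeasure M {\<omega>\<in>space M. x < \<bar>Y \<omega>\<bar>} = (\<integral>\<^sup>+z. ennreal (std_normal_density z) * indicator {z. x / s < \<bar>z\<bar>} z \<partial>lborel)"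
    unfolding eq by (rule distributed_emeasure[OF Z]) auto
  also have "\<dots> \<le> ennreal (exp (- (x / s)\<^sup>2 / 2))"
    by (rule std_tail) (use s x in auto)
  also have "\<dots> = ennreal (exp (- x\<^sup>2 / (2 * s\<^sup>2)))"
    by (simp add: power_divide)
  finally show ?thesis
    by (simp add: emeasure_eq_measure)
qed

lemma (in prob_space) lin_tail:
  assumes indep: "indep_vars (\<lambda>_. borel) \<eta> I" and fin: "finite I"
    and dist: "\<And>t. t \<in> I \<Longrightarrow> distributed M lborel (\<eta> t) (normal_density 0 \<sigma>)"
    and \<sigma>: "\<sigma> > 0" and C: "C > 0"
  shows "prob {\<omega>\<in>space M. (\<Sum>t\<in>I. (d t)\<^sup>2) / 4 + C / 2 < \<bar>\<Sum>t\<in>I. d t * \<eta> t \<omega>\<bar>} \<le> exp (- C / (4 * \<sigma>\<^sup>2))"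
proof -
  define J where "J = {t\<in>I. d t \<noteq> 0}"
  define v where "v = (\<Sum>t\<in>I. (d t)\<^sup>2)"
  have JI: "J \<subseteq> I" and finJ: "finite J" using fin by (auto simp: J_def)
  have sumeq: "(\<Sum>t\<in>I. d t * \<eta> t \<omega>) = (\<Sum>t\<in>J. d t * \<eta> t \<omega>)" for \<omega>
    by (rule sum.mono_neutral_right) (use fin in \<open>auto simp: J_def\<close>)
  have veq: "v = (\<Sum>t\<in>J. (d t)\<^sup>2)"
    unfolding v_def by (rule sum.mono_neutral_right) (use fin in \<open>auto simp: J_def\<close>)
  have v0: "v \<ge> 0" unfolding v_def by (auto intro: sum_nonneg)
  show ?thesis
  proof (cases "J = {}")
    case True
    then have E: "{\<omega>\<in>space M. v / 4 + C / 2 < \<bar>\<Sum>t\<in>I. d t * \<eta> t \<omega>\<bar>} = {}"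
      using sumeq v0 C by auto
    have "prob {\<omega>\<in>space M. v / 4 + C / 2 < \<bar>\<Sum>t\<in>I. d t * \<eta> t \<omega>\<bar>} = 0" unfolding E by simp
    then show ?thesis unfolding v_def by simp
  next
    case False
    have vpos: "v > 0" unfolding veq
      using False finJ by (intro sum_pos) (auto simp: J_def)
    have Di: "distributed M lborel (\<lambda>\<omega>. 0 + d t * \<eta> t \<omega>) (normal_density (0 + d t * 0) (\<bar>d t\<bar> * \<sigma>))"
      if "t \<in> J" for t
      by (rule normal_density_affine) (use that dist \<sigma> in \<open>auto simp: J_def\<close>)
    have indJ: "indep_vars (\<lambda>_. borel) (\<lambda>t \<omega>. d t * \<eta> t \<omega>) J"
      using indep_vars_compose2[OF indep_vars_subset[OF indep JI], where Y="\<lambda>t x. d t * x" and N="\<lambda>_. borel"]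
      by simp
    have S: "distributed M lborel (\<lambda>\<omega>. \<Sum>t\<in>J. d t * \<eta> t \<omega>) (normal_density (\<Sum>t\<in>J. 0) (sqrt (\<Sum>t\<in>J. (\<bar>d t\<bar> * \<sigma>)\<^sup>2)))"
      by (rule sum_indep_normal[OF finJ False indJ]) (use Di \<sigma> in \<open>auto simp: J_def\<close>)
    have sq: "sqrt (\<Sum>t\<in>J. (\<bar>d t\<bar> * \<sigma>)\<^sup>2) = \<sigma> * sqrt v"
      unfolding veq using \<sigma> by (simp add: power_mult_distrib sum_distrib_right[symmetric] real_sqrt_mult)
    have S': "distributed M lborel (\<lambda>\<omega>. \<Sum>t\<in>J. d t * \<eta> t \<omega>) (normal_density 0 (\<sigma> * sqrt v))"
      using S unfolding sq by simp
    define x where "x = v / 4 + C / 2"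
    have x0: "x \<ge> 0" using v0 C by (simp add: x_def)
    have "prob {\<omega>\<in>space M. x < \<bar>\<Sum>t\<in>J. d t * \<eta> t \<omega>\<bar>} \<le> exp (- x\<^sup>2 / (2 * (\<sigma> * sqrt v)\<^sup>2))"
      by (rule normal_tail[OF S' _ x0]) (use \<sigma> vpos in auto)
    also have "\<dots> \<le> exp (- C / (4 * \<sigma>\<^sup>2))"
    proof -
      have "x\<^sup>2 - v * C / 2 = (v / 4 - C / 2)\<^sup>2" unfolding x_def by (simp add: power2_eq_square algebra_simps)
      then have hx: "v * C / 2 \<le> x\<^sup>2" by (metis diff_ge_0_iff_ge zero_le_power2)
      have "(\<sigma> * sqrt v)\<^sup>2 = \<sigma>\<^sup>2 * v" using v0 by (simp add: power_mult_distrib)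
      moreover have "C / (4 * \<sigma>\<^sup>2) \<le> x\<^sup>2 / (2 * (\<sigma>\<^sup>2 * v))"
        using hx \<sigma> vpos by (simp add: field_simps)
      ultimately show ?thesis by simp
    qed
    finally show ?thesis unfolding v_def[symmetric] x_def sumeq .
  qed
qed

theorem mainTheorem1:
  fixes P :: "'w measure"
    and K k M :: nat
    and B :: "'b set" and \<Theta> :: "'c set"
    and f :: "nat \<Rightarrow> complex ^ 'n"
    and R :: "complex ^ 'n \<Rightarrow> (nat \<Rightarrow> 'b) \<Rightarrow> (nat \<Rightarrow> 'c) \<Rightarrow> real"
    and \<theta>s :: "nat \<Rightarrow> 'b" and \<beta>s :: "nat \<Rightarrow> 'c"
    and a :: "nat \<Rightarrow> nat"
    and \<eta> :: "nat \<Rightarrow> 'w \<Rightarrow> real"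
    and r :: "nat \<Rightarrow> 'w \<Rightarrow> real"
    and \<sigma> \<delta> :: real
  assumes "prob_space P"
    and "K > 0" "k > 0" "M > 0"
    and "finite B" "B \<noteq> {}" "finite \<Theta>" "\<Theta> \<noteq> {}"
    and "\<theta>s \<in> PiE {..<k} (\<lambda>_. B)" "\<beta>s \<in> PiE {..<k} (\<lambda>_. \<Theta>)"
    and "\<And>t. t \<in> {1..M} \<Longrightarrow> a t \<in> {1..K}"
    and "\<sigma> > 0"
    and "prob_space.indep_vars P (\<lambda>_. borel) \<eta> {1..M}"
    and "\<And>t. t \<in> {1..M} \<Longrightarrow> distributed P lborel (\<eta> t) (normal_density 0 \<sigma>)"
    and "\<And>t \<omega>. t \<in> {1..M} \<Longrightarrow> r t \<omega> = R (f (a t)) \<theta>s \<beta>s + \<eta> t \<omega>"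
    and "0 < \<delta>" "\<delta> < 1"
  shows "\<exists>E \<in> sets P. measure P E \<ge> 1 - \<delta> \<and>
    (\<forall>\<omega> \<in> E. \<forall>\<theta> \<in> PiE {..<k} (\<lambda>_. B). \<forall>\<beta> \<in> PiE {..<k} (\<lambda>_. \<Theta>).
       SSE M f a (\<lambda>x. R x \<theta> \<beta>) (\<lambda>t. r t \<omega>) - SSE M f a (\<lambda>x. R x \<theta>s \<beta>s) (\<lambda>t. r t \<omega>)
         \<ge> 1/2 * (data_norm M f a (\<lambda>x. R x \<theta> \<beta> - R x \<theta>s \<beta>s))\<^sup>2
           - 4 * real k * \<sigma>\<^sup>2 * ln (real (card B) * real (card \<Theta>) / \<delta>)
     \<and> SSE M f a (\<lambda>x. R x \<theta> \<beta>) (\<lambda>t. r t \<omega>) - SSE M f a (\<lambda>x. R x \<theta>s \<beta>s) (\<lambda>t. r t \<omega>)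
         \<le> 3/2 * (data_norm M f a (\<lambda>x. R x \<theta> \<beta> - R x \<theta>s \<beta>s))\<^sup>2
           + 4 * real k * \<sigma>\<^sup>2 * ln (real (card B) * real (card \<Theta>) / \<delta>))"
proof -
  interpret prob_space P by fact
  note A = assms
  define Par where "Par = PiE {..<k} (\<lambda>_. B) \<times> PiE {..<k} (\<lambda>_. \<Theta>)"
  define Q where "Q = real (card B) * real (card \<Theta>)"
  define C where "C = 4 * real k * \<sigma>\<^sup>2 * ln (Q / \<delta>)"
  define d where "d p t = R (f (a t)) (fst p) (snd p) - R (f (a t)) \<theta>s \<beta>s" for p t
  define bad where "bad p = {\<omega>\<in>space P. (\<Sum>t\<in>{1..M}. (d p t)\<^sup>2) / 4 + C / 2 < \<bar>\<Sum>t\<in>{1..M}. d p t * \<eta> t \<omega>\<bar>}" for p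
  define E where "E = space P - (\<Union>p\<in>Par. bad p)"
  have Q1: "Q \<ge> 1"
  proof -
    have "card B \<ge> 1" "card \<Theta> \<ge> 1" using A(5-8) by (auto simp: Suc_le_eq card_gt_0_iff)
    then show ?thesis unfolding Q_def by (metis mult_le_mono of_nat_1 of_nat_le_iff of_nat_mult mult_1)
  qed
  have Qd: "Q / \<delta> > 1" using Q1 A(16,17) by (simp add: field_simps)
  have Cpos: "C > 0" unfolding C_def using Qd A(3,12) by simp
  have meas: "\<eta> t \<in> borel_measurable P" if "t \<in> {1..M}" for t
    using distributed_measurable[OF A(14)[OF that]] by simp
  have badS: "bad p \<in> sets P" for p
  proof -
    have "(\<lambda>\<omega>. \<bar>\<Sum>t\<in>{1..M}. d p t * \<eta> t \<omega>\<bar>) \<in> borel_measurable P"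
      using meas by (intro borel_measurable_abs borel_measurable_sum borel_measurable_times) auto
    then show ?thesis unfolding bad_def by measurable
  qed
  have finPar: "finite Par" unfolding Par_def using A(5,7) by (auto intro!: finite_PiE)
  have cardPar: "real (card Par) = Q ^ k"
    unfolding Par_def Q_def using A(5,7)
    by (simp add: card_cartesian_product card_PiE finite_PiE power_mult_distrib)
  have pb: "prob (bad p) \<le> exp (- C / (4 * \<sigma>\<^sup>2))" for p
    unfolding bad_def by (rule lin_tail[OF A(13) _ A(14) A(12) Cpos]) auto
  have expC: "exp (- C / (4 * \<sigma>\<^sup>2)) = (\<delta> / Q) ^ k"
  proof -
    have "- C / (4 * \<sigma>\<^sup>2) = real k * ln (\<delta> / Q)"
      unfolding C_def using A(12,16) Q1 by (simp add: ln_div field_simps)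
    then show ?thesis using A(16) Q1 by (simp add: exp_of_nat_mult)
  qed
  have "prob (\<Union>p\<in>Par. bad p) \<le> (\<Sum>p\<in>Par. prob (bad p))"
    by (rule measure_UNION_le[OF finPar]) (use badS in auto)
  also have "\<dots> \<le> (\<Sum>p\<in>Par. (\<delta> / Q) ^ k)"
    by (intro sum_mono) (use pb expC in auto)
  also have "\<dots> = \<delta> ^ k"
    using cardPar Q1 by (simp add: power_divide)
  also have "\<dots> \<le> \<delta>"
    using A(3,16,17) by (simp add: power_le_one_iff power_decreasing[of 1 k \<delta>, simplified])
  finally have pU: "prob (\<Union>p\<in>Par. bad p) \<le> \<delta>" .
  have US: "(\<Union>p\<in>Par. bad p) \<in> sets P" using finPar badS by auto
  have ES: "E \<in> sets P" unfolding E_def using US by auto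
  have pE: "measure P E \<ge> 1 - \<delta>"
    unfolding E_def using prob_compl[OF US] pU by simp
  have key: "SSE M f a (\<lambda>x. R x (fst p) (snd p)) (\<lambda>t. r t \<omega>) - SSE M f a (\<lambda>x. R x \<theta>s \<beta>s) (\<lambda>t. r t \<omega>)
      = (\<Sum>t\<in>{1..M}. (d p t)\<^sup>2) - 2 * (\<Sum>t\<in>{1..M}. d p t * \<eta> t \<omega>)" for p \<omega>
  proof -
    have "SSE M f a (\<lambda>x. R x (fst p) (snd p)) (\<lambda>t. r t \<omega>) - SSE M f a (\<lambda>x. R x \<theta>s \<beta>s) (\<lambda>t. r t \<omega>)
      = (\<Sum>t\<in>{1..M}. (d p t)\<^sup>2 - 2 * (d p t * \<eta> t \<omega>))"
      unfolding SSE_def sum_subtractf[symmetric]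
      by (intro sum.cong refl) (simp add: A(15) d_def power2_eq_square algebra_simps)
    then show ?thesis by (simp add: sum_subtractf sum_distrib_left)
  qed
  have dn: "(data_norm M f a (\<lambda>x. R x (fst p) (snd p) - R x \<theta>s \<beta>s))\<^sup>2 = (\<Sum>t\<in>{1..M}. (d p t)\<^sup>2)" for p
    unfolding data_norm_def d_def by (simp add: sum_nonneg)
  show ?thesis
  proof (intro bexI[OF _ ES] conjI pE ballI)
    fix \<omega> \<theta> \<beta> assume \<omega>: "\<omega> \<in> E" and \<theta>: "\<theta> \<in> PiE {..<k} (\<lambda>_. B)" and \<beta>: "\<beta> \<in> PiE {..<k} (\<lambda>_. \<Theta>)"
    define p where "p = (\<theta>, \<beta>)"
    have "p \<in> Par" unfolding p_def Par_def using \<theta> \<beta> by auto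
    then have "\<omega> \<notin> bad p" "\<omega> \<in> space P" using \<omega> unfolding E_def by auto
    then have nb: "\<bar>\<Sum>t\<in>{1..M}. d p t * \<eta> t \<omega>\<bar> \<le> (\<Sum>t\<in>{1..M}. (d p t)\<^sup>2) / 4 + C / 2"
      unfolding bad_def by auto
    have k1: "SSE M f a (\<lambda>x. R x \<theta> \<beta>) (\<lambda>t. r t \<omega>) - SSE M f a (\<lambda>x. R x \<theta>s \<beta>s) (\<lambda>t. r t \<omega>)
      = (\<Sum>t\<in>{1..M}. (d p t)\<^sup>2) - 2 * (\<Sum>t\<in>{1..M}. d p t * \<eta> t \<omega>)"
      using key[of p \<omega>] by (simp add: p_def)
    have k2: "(data_norm M f a (\<lambda>x. R x \<theta> \<beta> - R x \<theta>s \<beta>s))\<^sup>2 = (\<Sum>t\<in>{1..M}. (d p t)\<^sup>2)"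
      using dn[of p] by (simp add: p_def)
    show "SSE M f a (\<lambda>x. R x \<theta> \<beta>) (\<lambda>t. r t \<omega>) - SSE M f a (\<lambda>x. R x \<theta>s \<beta>s) (\<lambda>t. r t \<omega>)
         \<ge> 1/2 * (data_norm M f a (\<lambda>x. R x \<theta> \<beta> - R x \<theta>s \<beta>s))\<^sup>2
           - 4 * real k * \<sigma>\<^sup>2 * ln (real (card B) * real (card \<Theta>) / \<delta>)"
      unfolding k1 k2 using nb unfolding C_def Q_def by (simp add: abs_le_iff)
    show "SSE M f a (\<lambda>x. R x \<theta> \<beta>) (\<lambda>t. r t \<omega>) - SSE M f a (\<lambda>x. R x \<theta>s \<beta>s) (\<lambda>t. r t \<omega>)
         \<le> 3/2 * (data_norm M f a (\<lambda>x. R x \<theta> \<beta> - R x \<theta>s \<beta>s))\<^sup>2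
           + 4 * real k * \<sigma>\<^sup>2 * ln (real (card B) * real (card \<Theta>) / \<delta>)"
      unfolding k1 k2 using nb unfolding C_def Q_def by (simp add: abs_le_iff)
  qed
qed

end
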